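(* Let $z\ge0$ be an integer. If an undirected multigraph $G$ has a $z$-antler $(C_1,F_1)$ and an antler $(C_2,F_2)$, then $(C_1\setminus(C_2\cup F_2),\,F_1\setminus(C_2\cup F_2))$ is a $z$-antler in $G-(C_2\cup F_2)$.
   Context: A feedback vertex set (FVS) of $G$ is a set $X\subseteq V(G)$ with $G-X$ acyclic (self-loops and pairs of parallel edges count as cycles); $\mathrm{fvs}(G)$ is its minimum size. For disjoint $X,Y$, $e(X,Y)$ is the number of edges between $X$ and $Y$. A feedback vertex cut (FVC) in $G$ is a pair of disjoint sets $C,F\subseteq V(G)$ such that $G[F]$ is a forest and every tree $T$ of $G[F]$ satisfies $e(V(T),V(G)\setminus(C\cup F))\le1$. An antler is a FVC $(C,F)$ with $|C|\le\mathrm{fvs}(G[C\cup F])$. For $C\subseteq V(G)$, a $C$-certificate is a subgraph $H$ of $G$ such that $C$ is a minimum FVS of $H$; it has order $z$ if every component $H'$ of $H$ satisfies $\mathrm{fvs}(H')=|C\cap V(H')|\le z$. A $z$-antler is an antler $(C,F)$ such that $G[C\cup F]$ contains a $C$-certificate of order $z$. *)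

theory Defs
  imports Main
begin

text \<open>Finite undirected multigraphs with explicit edge identities (allowing
self-loops and parallel edges). An edge e has endpoints fst (ends G e) and
snd (ends G e); the orientation is irrelevant.\<close>

record ('a, 'e) mgraph =
  verts :: "'a set"
  edges :: "'e set"
  ends  :: "'e \<Rightarrow> 'a \<times> 'a"

definition wf_mgraph :: "('a, 'e) mgraph \<Rightarrow> bool" where
  "wf_mgraph G \<longleftrightarrow> finite (verts G) \<and> finite (edges G) \<and>
     (\<forall>e\<in>edges G. fst (ends G e) \<in> verts G \<and> snd (ends G e) \<in> verts G)"

definition joins :: "('a, 'e) mgraph \<Rightarrow> 'e \<Rightarrow> 'a \<Rightarrow> 'a \<Rightarrow> bool" where
  "joins G e u v \<longleftrightarrow> ends G e = (u, v) \<or> ends G e = (v, u)"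

text \<open>A cycle: distinct vertices v0..v(k-1), k \<ge> 1, and distinct edges e0..e(k-1),
 where e_i joins v_i and v_(i+1 mod k). k = 1 is a self-loop, k = 2 a pair of
 parallel edges.\<close>
definition has_cycle :: "('a, 'e) mgraph \<Rightarrow> bool" where
  "has_cycle G \<longleftrightarrow> (\<exists>vs es. length vs = length es \<and> 1 \<le> length vs \<and>
      distinct vs \<and> distinct es \<and> set vs \<subseteq> verts G \<and> set es \<subseteq> edges G \<and>
      (\<forall>i < length vs. joins G (es ! i) (vs ! i) (vs ! ((i + 1) mod length vs))))"

definition forest :: "('a, 'e) mgraph \<Rightarrow> bool" where
  "forest G \<longleftrightarrow> \<not> has_cycle G"

definition induced :: "('a, 'e) mgraph \<Rightarrow> 'a set \<Rightarrow> ('a, 'e) mgraph" where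
  "induced G X = \<lparr> verts = verts G \<inter> X,
     edges = {e \<in> edges G. fst (ends G e) \<in> X \<and> snd (ends G e) \<in> X},
     ends = ends G \<rparr>"

definition del_verts :: "('a, 'e) mgraph \<Rightarrow> 'a set \<Rightarrow> ('a, 'e) mgraph" where
  "del_verts G X = induced G (verts G - X)"

definition subgraph :: "('a, 'e) mgraph \<Rightarrow> ('a, 'e) mgraph \<Rightarrow> bool" where
  "subgraph H G \<longleftrightarrow> verts H \<subseteq> verts G \<and> edges H \<subseteq> edges G \<and> ends H = ends G \<and>
     (\<forall>e\<in>edges H. fst (ends H e) \<in> verts H \<and> snd (ends H e) \<in> verts H)"

definition is_fvs :: "('a, 'e) mgraph \<Rightarrow> 'a set \<Rightarrow> bool" where
  "is_fvs G X \<longleftrightarrow> X \<subseteq> verts G \<and> forest (del_verts G X)"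

definition fvs :: "('a, 'e) mgraph \<Rightarrow> nat" where
  "fvs G = (LEAST n. \<exists>X. is_fvs G X \<and> card X = n)"

definition min_fvs :: "('a, 'e) mgraph \<Rightarrow> 'a set \<Rightarrow> bool" where
  "min_fvs G X \<longleftrightarrow> is_fvs G X \<and> card X = fvs G"

definition n_edges_between :: "('a, 'e) mgraph \<Rightarrow> 'a set \<Rightarrow> 'a set \<Rightarrow> nat" where
  "n_edges_between G X Y = card {e \<in> edges G.
      (fst (ends G e) \<in> X \<and> snd (ends G e) \<in> Y) \<or> (fst (ends G e) \<in> Y \<and> snd (ends G e) \<in> X)}"

definition adj :: "('a, 'e) mgraph \<Rightarrow> ('a \<times> 'a) set" where
  "adj G = {(u, v). \<exists>e\<in>edges G. joins G e u v}"

definition components :: "('a, 'e) mgraph \<Rightarrow> 'a set set" where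
  "components G = (\<lambda>u. {v \<in> verts G. (u, v) \<in> (adj G)\<^sup>*}) ` verts G"

definition FVC :: "('a, 'e) mgraph \<Rightarrow> 'a set \<Rightarrow> 'a set \<Rightarrow> bool" where
  "FVC G C F \<longleftrightarrow> C \<subseteq> verts G \<and> F \<subseteq> verts G \<and> C \<inter> F = {} \<and>
     forest (induced G F) \<and>
     (\<forall>T \<in> components (induced G F). n_edges_between G T (verts G - (C \<union> F)) \<le> 1)"

definition antler :: "('a, 'e) mgraph \<Rightarrow> 'a set \<Rightarrow> 'a set \<Rightarrow> bool" where
  "antler G C F \<longleftrightarrow> FVC G C F \<and> card C \<le> fvs (induced G (C \<union> F))"

definition certificate :: "('a, 'e) mgraph \<Rightarrow> 'a set \<Rightarrow> nat \<Rightarrow> bool" where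
  "certificate H C z \<longleftrightarrow> min_fvs H C \<and>
     (\<forall>K \<in> components H. fvs (induced H K) = card (C \<inter> K) \<and> card (C \<inter> K) \<le> z)"

definition z_antler :: "('a, 'e) mgraph \<Rightarrow> nat \<Rightarrow> 'a set \<Rightarrow> 'a set \<Rightarrow> bool" where
  "z_antler G z C F \<longleftrightarrow> antler G C F \<and>
     (\<exists>H. subgraph H (induced G (C \<union> F)) \<and> certificate H C z)"

end

theory Submission
  imports Defs
begin
definition cyc :: "('a, 'e) mgraph \<Rightarrow> 'a list \<Rightarrow> 'e list \<Rightarrow> bool" where
  "cyc G vs es \<longleftrightarrow> length vs = length es \<and> 1 \<le> length vs \<and>
      distinct vs \<and> distinct es \<and> set vs \<subseteq> verts G \<and> set es \<subseteq> edges G \<and>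
      (\<forall>i < length vs. joins G (es ! i) (vs ! i) (vs ! ((i + 1) mod length vs)))"

lemma has_cycle_cyc: "has_cycle G \<longleftrightarrow> (\<exists>vs es. cyc G vs es)"
  unfolding has_cycle_def cyc_def by blast

lemma forest_cyc: "forest G \<longleftrightarrow> (\<forall>vs es. \<not> cyc G vs es)"
  unfolding forest_def has_cycle_cyc by blast

lemma cyc_induced: "cyc (induced G X) vs es \<longleftrightarrow> cyc G vs es \<and> set vs \<subseteq> X"
proof
  assume c: "cyc (induced G X) vs es"
  then show "cyc G vs es \<and> set vs \<subseteq> X"
    unfolding cyc_def joins_def induced_def by auto
next
  assume c: "cyc G vs es \<and> set vs \<subseteq> X"
  have "e \<in> edges (induced G X)" if "e \<in> set es" for e
  proof -
    obtain k where k: "k < length es" "e = es ! k" using \<open>e \<in> set es\<close> by (auto simp: in_set_conv_nth)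
    have n: "length vs = length es" "1 \<le> length vs" using c unfolding cyc_def by auto
    have j: "joins G e (vs ! k) (vs ! ((k + 1) mod length vs))" using c k n unfolding cyc_def by auto
    have "(k + 1) mod length vs < length vs" by (rule mod_less_divisor) (use n in auto)
    then have "vs ! k \<in> X" "vs ! ((k + 1) mod length vs) \<in> X"
      using c k n by (auto intro!: nth_mem)
    moreover have "e \<in> edges G" using c k unfolding cyc_def by auto
    ultimately show ?thesis using j unfolding joins_def induced_def by auto
  qed
  then show "cyc (induced G X) vs es"
    using c unfolding cyc_def joins_def induced_def by auto
qed

lemma cyc_verts: "cyc G vs es \<Longrightarrow> set vs \<subseteq> verts G"
  unfolding cyc_def by auto

lemma cyc_ne: "cyc G vs es \<Longrightarrow> set vs \<noteq> {}"
  unfolding cyc_def by auto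

lemma cyc_del: "cyc (del_verts G X) vs es \<longleftrightarrow> cyc G vs es \<and> set vs \<inter> X = {}"
  unfolding del_verts_def cyc_induced using cyc_verts by blast

lemma cyc_sub: "subgraph H G \<Longrightarrow> cyc H vs es \<Longrightarrow> cyc G vs es"
  unfolding subgraph_def cyc_def joins_def by auto

lemma is_fvs_iff: "is_fvs G X \<longleftrightarrow> X \<subseteq> verts G \<and> (\<forall>vs es. cyc G vs es \<longrightarrow> set vs \<inter> X \<noteq> {})"
  unfolding is_fvs_def forest_cyc cyc_del by blast

lemma fvs_le: "is_fvs G X \<Longrightarrow> fvs G \<le> card X"
  unfolding fvs_def by (rule Least_le) blast

lemma fvs_exists: assumes "finite (verts G)" shows "\<exists>X. is_fvs G X \<and> card X = fvs G"
proof -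
  have "is_fvs G (verts G)" unfolding is_fvs_iff
  proof (intro conjI allI impI)
    fix vs es assume c: "cyc G vs es"
    show "set vs \<inter> verts G \<noteq> {}" using cyc_verts[OF c] cyc_ne[OF c] by (simp add: Int_absorb2)
  qed simp
  then have ex: "\<exists>X. is_fvs G X \<and> card X = card (verts G)" by blast
  show ?thesis unfolding fvs_def by (rule LeastI[where P="\<lambda>n. \<exists>X. is_fvs G X \<and> card X = n" and k="card (verts G)"]) (rule ex)
qed

lemma cyc_prop:
  assumes "(n::nat) > 0" "i0 < n" "P i0" "\<forall>i<n. P i \<longrightarrow> P ((i+1) mod n)"
  shows "\<forall>j<n. P j"
proof -
  have k: "P ((i0 + k) mod n)" for k
  proof (induction k)
    case 0 then show ?case using assms by simp
  next
    case (Suc k)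
    have "(i0 + Suc k) mod n = ((i0 + k) mod n + 1) mod n" by (simp add: mod_Suc_eq)
    then show ?case using Suc assms(1,4) by auto
  qed
  show ?thesis
  proof (intro allI impI)
    fix j assume "j < n"
    have "(i0 + (j + n - i0)) mod n = j" using \<open>j<n\<close> assms(2) by simp
    then show "P j" using k[of "j + n - i0"] by simp
  qed
qed

lemma induced_simps[simp]:
  "verts (induced G X) = verts G \<inter> X"
  "edges (induced G X) = {e \<in> edges G. fst (ends G e) \<in> X \<and> snd (ends G e) \<in> X}"
  "ends (induced G X) = ends G"
  unfolding induced_def by auto

lemma fvc_cycle:
  assumes fvc: "FVC G C F" and wf: "wf_mgraph G" and c: "cyc G vs es" and dC: "set vs \<inter> C = {}"
  shows "set vs \<inter> F = {}"
proof (rule ccontr)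
  assume "set vs \<inter> F \<noteq> {}"
  then obtain i0 where i0: "i0 < length vs" "vs ! i0 \<in> F" by (auto simp: in_set_conv_nth)
  define n where "n = length vs"
  define GF where "GF = induced G F"
  define T where "T = {v \<in> verts GF. (vs ! i0, v) \<in> (adj GF)\<^sup>*}"
  have vsV: "\<forall>i<n. vs!i \<in> verts G" using cyc_verts[OF c] n_def by auto
  have T_comp: "T \<in> components GF" unfolding components_def T_def
    using i0 vsV n_def by (auto simp: GF_def)
  have i0T: "vs ! i0 \<in> T" unfolding T_def GF_def using i0 vsV n_def by auto
  have Tsub: "T \<subseteq> F \<inter> verts G" unfolding T_def GF_def by auto
  have n0: "n > 0" using i0 n_def by auto
  have jn: "\<forall>i<n. joins G (es!i) (vs!i) (vs!((i+1) mod n)) \<and> es!i \<in> edges G"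
    using c n_def unfolding cyc_def by (auto intro: nth_mem)
  have closed: "w \<in> T" if "v \<in> T" "w \<in> F" "w \<in> verts G" "e \<in> edges G" "joins G e v w" for v w e
  proof -
    have "e \<in> edges GF" "joins GF e v w" using that Tsub unfolding GF_def joins_def by auto
    then have "(v,w) \<in> adj GF" unfolding adj_def by auto
    moreover have "w \<in> verts GF" using that unfolding GF_def by auto
    ultimately show ?thesis using that(1) unfolding T_def by (auto intro: rtrancl_into_rtrancl)
  qed
  have joins_sym: "joins G e u v = joins G e v u" for e u v unfolding joins_def by auto
  show False
  proof (cases "\<forall>i<n. vs!i \<in> T")
    case True
    then have "\<forall>i<n. vs!i \<in> F" using Tsub by blast
    then have "set vs \<subseteq> F" using n_def by (auto simp: in_set_conv_nth)
    then have "cyc GF vs es" unfolding GF_def cyc_induced using c by blast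
    then show False using fvc unfolding FVC_def forest_cyc GF_def by auto
  next
    case False
    then obtain j0 where j0: "j0<n" "vs!j0 \<notin> T" by auto
    have "\<exists>i<n. vs!i \<in> T \<and> vs!((i+1) mod n) \<notin> T"
    proof (rule ccontr)
      assume "\<not> ?thesis"
      then have "\<forall>i<n. vs!i \<in> T \<longrightarrow> vs!((i+1) mod n) \<in> T" by auto
      from cyc_prop[of n i0 "\<lambda>i. vs!i \<in> T", OF n0 _ i0T this] i0 n_def j0 show False by auto
    qed
    then obtain i where i: "i<n" "vs!i \<in> T" "vs!((i+1) mod n) \<notin> T" by auto
    have "\<exists>i<n. vs!i \<notin> T \<and> vs!((i+1) mod n) \<in> T"
    proof (rule ccontr)
      assume "\<not> ?thesis"
      then have "\<forall>i<n. vs!i \<notin> T \<longrightarrow> vs!((i+1) mod n) \<notin> T" by auto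
      from cyc_prop[of n j0 "\<lambda>i. vs!i \<notin> T", OF n0 j0(1) j0(2) this] i0 n_def i0T show False by auto
    qed
    then obtain j where j: "j<n" "vs!j \<notin> T" "vs!((j+1) mod n) \<in> T" by auto
    have ij: "i \<noteq> j" using i j by auto
    have len: "length es = n" "distinct es" using c n_def unfolding cyc_def by auto
    have ein: "es!i \<noteq> es!j" using ij i(1) j(1) len by (simp add: nth_eq_iff_index_eq)
    define Out where "Out = verts G - (C \<union> F)"
    have mi: "(i+1) mod n < n" "(j+1) mod n < n" using n0 by auto
    have notC: "vs!k \<notin> C" if "k < n" for k using dC that n_def nth_mem by blast
    have b_out: "vs!((i+1) mod n) \<in> Out"
    proof -
      have "vs!((i+1) mod n) \<notin> F" using closed[of "vs!i" "vs!((i+1) mod n)" "es!i"] i jn vsV mi by auto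
      then show ?thesis unfolding Out_def using notC[OF mi(1)] vsV mi by auto
    qed
    have a_out: "vs!j \<in> Out"
    proof -
      have "vs!j \<notin> F" using closed[of "vs!((j+1) mod n)" "vs!j" "es!j"] j jn vsV joins_sym by auto
      then show ?thesis unfolding Out_def using notC[OF j(1)] vsV j by auto
    qed
    define E where "E = {e \<in> edges G. (fst (ends G e) \<in> T \<and> snd (ends G e) \<in> Out) \<or> (fst (ends G e) \<in> Out \<and> snd (ends G e) \<in> T)}"
    have "es!i \<in> E" using jn i b_out unfolding E_def joins_def by auto
    moreover have "es!j \<in> E" using jn j a_out unfolding E_def joins_def by auto
    ultimately have sub: "{es!i, es!j} \<subseteq> E" by auto
    have "finite E" using wf unfolding wf_mgraph_def E_def by auto
    then have "card {es!i, es!j} \<le> card E" using sub card_mono by blast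
    then have "2 \<le> card E" using ein by simp
    moreover have "card E \<le> 1" using fvc T_comp unfolding FVC_def n_edges_between_def E_def Out_def GF_def by auto
    ultimately show False by simp
  qed
qed

lemma cyc_comp:
  assumes K: "K \<in> components A" and c: "cyc A vs es" and ne: "set vs \<inter> K \<noteq> {}"
  shows "set vs \<subseteq> K"
proof -
  obtain u where u: "u \<in> verts A" "K = {v \<in> verts A. (u, v) \<in> (adj A)\<^sup>*}"
    using K unfolding components_def by auto
  define n where "n = length vs"
  obtain i0 where i0: "i0 < n" "vs ! i0 \<in> K" using ne n_def by (auto simp: in_set_conv_nth)
  have n0: "n > 0" using i0 by auto
  have vsV: "\<forall>i<n. vs!i \<in> verts A" using cyc_verts[OF c] n_def by auto
  have jn: "\<forall>i<n. joins A (es!i) (vs!i) (vs!((i+1) mod n)) \<and> es!i \<in> edges A"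
    using c n_def unfolding cyc_def by (auto intro: nth_mem)
  have step: "\<forall>i<n. vs!i \<in> K \<longrightarrow> vs!((i+1) mod n) \<in> K"
  proof (intro allI impI)
    fix i assume i: "i < n" "vs!i \<in> K"
    have "(vs!i, vs!((i+1) mod n)) \<in> adj A" using jn i unfolding adj_def by auto
    moreover have "vs!((i+1) mod n) \<in> verts A" using vsV n0 by auto
    ultimately show "vs!((i+1) mod n) \<in> K" using i u by (auto intro: rtrancl_into_rtrancl)
  qed
  have "\<forall>j<n. vs!j \<in> K" by (rule cyc_prop[OF n0 i0 step])
  then show ?thesis using n_def by (auto simp: in_set_conv_nth)
qed

lemma adj_mono: "edges A \<subseteq> edges B \<Longrightarrow> ends A = ends B \<Longrightarrow> adj A \<subseteq> adj B"
  unfolding adj_def joins_def by auto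

lemma comp_sub:
  assumes "K' \<in> components A" "verts A \<subseteq> verts B" "edges A \<subseteq> edges B" "ends A = ends B"
  shows "\<exists>K \<in> components B. K' \<subseteq> K"
proof -
  obtain u where u: "u \<in> verts A" "K' = {v \<in> verts A. (u, v) \<in> (adj A)\<^sup>*}"
    using assms(1) unfolding components_def by auto
  have "adj A \<subseteq> adj B" using adj_mono assms by blast
  then have "(adj A)\<^sup>* \<subseteq> (adj B)\<^sup>*" by (rule rtrancl_mono)
  then have "K' \<subseteq> {v \<in> verts B. (u, v) \<in> (adj B)\<^sup>*}" using u assms(2) by auto
  moreover have "{v \<in> verts B. (u, v) \<in> (adj B)\<^sup>*} \<in> components B"
    unfolding components_def using u assms(2) by auto
  ultimately show ?thesis by blast
qed

lemma fvs_mono_sub: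
  assumes "subgraph H B" "finite (verts B)"
  shows "fvs H \<le> fvs B"
proof -
  obtain Z where Z: "is_fvs B Z" "card Z = fvs B" using fvs_exists[OF assms(2)] by blast
  have "is_fvs H (Z \<inter> verts H)" unfolding is_fvs_iff
  proof (intro conjI allI impI)
    fix vs es assume c: "cyc H vs es"
    have "set vs \<inter> Z \<noteq> {}" using Z(1) cyc_sub[OF assms(1) c] unfolding is_fvs_iff by blast
    then show "set vs \<inter> (Z \<inter> verts H) \<noteq> {}" using cyc_verts[OF c] by blast
  qed auto
  then have "fvs H \<le> card (Z \<inter> verts H)" by (rule fvs_le)
  also have "\<dots> \<le> card Z" using Z(1) assms(2) unfolding is_fvs_def
    by (meson card_mono finite_subset inf_le1)
  finally show ?thesis using Z by simp
qed

lemma del_verts_simps[simp]: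
  "verts (del_verts G X) = verts G - X"
  "edges (del_verts G X) = {e \<in> edges G. fst (ends G e) \<in> verts G - X \<and> snd (ends G e) \<in> verts G - X}"
  "ends (del_verts G X) = ends G"
  unfolding del_verts_def by auto

theorem lemma10:
  fixes G :: "('a, 'e) mgraph" and z :: nat and C1 F1 C2 F2 :: "'a set"
  assumes "wf_mgraph G"
    and "z_antler G z C1 F1"
    and "antler G C2 F2"
  shows "z_antler (del_verts G (C2 \<union> F2)) z (C1 - (C2 \<union> F2)) (F1 - (C2 \<union> F2))"
proof -
  note wf = assms(1)
  have fin: "finite (verts G)" "finite (edges G)" using wf unfolding wf_mgraph_def by auto
  have fvc1: "FVC G C1 F1" using assms(2) unfolding z_antler_def antler_def by auto
  have fvc2: "FVC G C2 F2" and c2le: "card C2 \<le> fvs (induced G (C2 \<union> F2))"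
    using assms(3) unfolding antler_def by auto
  obtain H where Hsub: "subgraph H (induced G (C1 \<union> F1))" and cert: "certificate H C1 z"
    using assms(2) unfolding z_antler_def by auto
  define S where "S = C2 \<union> F2"
  define C1' where "C1' = C1 - S"
  define F1' where "F1' = F1 - S"
  define G' where "G' = del_verts G S"
  define H' where "H' = del_verts H S"
  have vH: "verts H \<subseteq> verts G \<inter> (C1 \<union> F1)" using Hsub unfolding subgraph_def by auto
  have finH: "finite (verts H)" using vH fin finite_subset by blast
  have cycH: "cyc G vs es \<and> set vs \<subseteq> C1 \<union> F1" if "cyc H vs es" for vs es
    using cyc_sub[OF Hsub that] by (simp add: cyc_induced)
  have C1fvs: "is_fvs H C1" and C1card: "card C1 = fvs H"
    using cert unfolding certificate_def min_fvs_def by auto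
  have C1H: "C1 \<subseteq> verts H" using C1fvs unfolding is_fvs_def by auto
  have finC1: "finite C1" using C1H finH finite_subset by blast
  have C2V: "C2 \<subseteq> verts G" "F2 \<subseteq> verts G" using fvc2 unfolding FVC_def by auto
  have finC2: "finite C2" using C2V fin finite_subset by blast
  have vH': "verts H' = verts H - S" unfolding H'_def by auto
  have finH': "finite (verts H')" using vH' finH by auto
  have cycH': "cyc H' vs es \<longleftrightarrow> cyc H vs es \<and> set vs \<inter> S = {}" for vs es
    unfolding H'_def cyc_del by simp
  have C1'fvs: "is_fvs H' C1'" unfolding is_fvs_iff
  proof (intro conjI allI impI)
    show "C1' \<subseteq> verts H'" using C1H vH' C1'_def by auto
  next
    fix vs es assume c: "cyc H' vs es"
    then have "cyc H vs es" "set vs \<inter> S = {}" using cycH' by auto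
    then have "set vs \<inter> C1 \<noteq> {}" using C1fvs unfolding is_fvs_iff by blast
    then show "set vs \<inter> C1' \<noteq> {}" using \<open>set vs \<inter> S = {}\<close> C1'_def by blast
  qed
  have key: "card C1' \<le> card X" if X: "is_fvs H' X" for X
  proof -
    have XH: "X \<subseteq> verts H - S" using X vH' unfolding is_fvs_def by auto
    have finX: "finite X" using XH finH finite_subset by blast
    have F1: "is_fvs H (X \<union> (C2 \<inter> verts H))" unfolding is_fvs_iff
    proof (intro conjI allI impI)
      show "X \<union> (C2 \<inter> verts H) \<subseteq> verts H" using XH by auto
    next
      fix vs es assume c: "cyc H vs es"
      show "set vs \<inter> (X \<union> (C2 \<inter> verts H)) \<noteq> {}"
      proof
        assume d: "set vs \<inter> (X \<union> (C2 \<inter> verts H)) = {}"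
        have cG: "cyc G vs es" using cycH[OF c] by auto
        have "set vs \<inter> C2 = {}" using d cyc_verts[OF c] by blast
        then have "set vs \<inter> F2 = {}" using fvc_cycle[OF fvc2 wf cG] by blast
        then have "set vs \<inter> S = {}" using \<open>set vs \<inter> C2 = {}\<close> S_def by blast
        then have "cyc H' vs es" using cycH' c by auto
        then have "set vs \<inter> X \<noteq> {}" using X unfolding is_fvs_iff by blast
        then show False using d by blast
      qed
    qed
    have a1: "card C1 \<le> card X + card (C2 \<inter> verts H)"
      using fvs_le[OF F1] C1card card_Un_le[of X "C2 \<inter> verts H"] by linarith
    define R where "R = S - (C1 \<union> F1)"
    obtain Y where Y: "is_fvs (induced G R) Y" "card Y = fvs (induced G R)"
      using fvs_exists[of "induced G R"] fin by auto
    have finY: "finite Y" using Y(1) fin unfolding is_fvs_def by (auto intro: finite_subset)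
    have F2: "is_fvs (induced G R) (C2 - (C1 \<union> F1))" unfolding is_fvs_iff
    proof (intro conjI allI impI)
      show "C2 - (C1 \<union> F1) \<subseteq> verts (induced G R)" using C2V R_def S_def by auto
    next
      fix vs es assume c: "cyc (induced G R) vs es"
      show "set vs \<inter> (C2 - (C1 \<union> F1)) \<noteq> {}"
      proof
        assume d: "set vs \<inter> (C2 - (C1 \<union> F1)) = {}"
        have cG: "cyc G vs es" "set vs \<subseteq> R" using c by (simp_all add: cyc_induced)
        then have "set vs \<subseteq> F2" using d R_def S_def by blast
        then have "cyc (induced G F2) vs es" using cG by (simp add: cyc_induced)
        then show False using fvc2 unfolding FVC_def forest_cyc by blast
      qed
    qed
    have a2: "card Y \<le> card (C2 - (C1 \<union> F1))" using fvs_le[OF F2] Y(2) by simp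
    have F3: "is_fvs (induced G S) (Y \<union> (C1 \<inter> S))" unfolding is_fvs_iff
    proof (intro conjI allI impI)
      show "Y \<union> (C1 \<inter> S) \<subseteq> verts (induced G S)" using Y(1) C1H vH R_def unfolding is_fvs_def by auto
    next
      fix vs es assume c: "cyc (induced G S) vs es"
      show "set vs \<inter> (Y \<union> (C1 \<inter> S)) \<noteq> {}"
      proof
        assume d: "set vs \<inter> (Y \<union> (C1 \<inter> S)) = {}"
        have cG: "cyc G vs es" "set vs \<subseteq> S" using c by (simp_all add: cyc_induced)
        then have "set vs \<inter> C1 = {}" using d by blast
        then have "set vs \<inter> F1 = {}" using fvc_cycle[OF fvc1 wf cG(1)] by blast
        then have "set vs \<subseteq> R" using cG(2) \<open>set vs \<inter> C1 = {}\<close> R_def by blast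
        then have "cyc (induced G R) vs es" using cG by (simp add: cyc_induced)
        then have "set vs \<inter> Y \<noteq> {}" using Y(1) unfolding is_fvs_iff by blast
        then show False using d by blast
      qed
    qed
    have a3: "card C2 \<le> card Y + card (C1 \<inter> S)"
      using fvs_le[OF F3] c2le[folded S_def] card_Un_le[of Y "C1 \<inter> S"] by linarith
    have a4: "card C2 = card (C2 \<inter> verts H) + card (C2 - verts H)"
      using finC2 by (metis Diff_Diff_Int card_Diff_subset_Int card_Int_Diff inf_commute) 
    have a5: "card (C2 - (C1 \<union> F1)) \<le> card (C2 - verts H)"
      using vH finC2 by (intro card_mono) auto
    have a6: "card C1 = card C1' + card (C1 \<inter> S)"
      unfolding C1'_def using finC1 by (metis card_Int_Diff inf_commute add.commute)
    show ?thesis using a1 a2 a3 a4 a5 a6 by linarith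
  qed
  have fvsH': "fvs H' = card C1'"
  proof -
    obtain X0 where X0: "is_fvs H' X0" "card X0 = fvs H'" using fvs_exists[OF finH'] by blast
    have "card C1' \<le> card X0" by (rule key[OF X0(1)])
    then have "card C1' \<le> fvs H'" using X0(2) by simp
    moreover have "fvs H' \<le> card C1'" using fvs_le[OF C1'fvs] .
    ultimately show ?thesis by simp
  qed
  have finC1': "finite C1'" using finC1 C1'_def by auto
  have comps: "fvs (induced H' K') = card (C1' \<inter> K') \<and> card (C1' \<inter> K') \<le> z"
    if K': "K' \<in> components H'" for K'
  proof
    obtain K where K: "K \<in> components H" "K' \<subseteq> K"
      using comp_sub[OF K'] vH' unfolding H'_def by auto
    have "card (C1' \<inter> K') \<le> card (C1 \<inter> K)" using finC1 K(2) C1'_def by (intro card_mono) auto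
    also have "\<dots> \<le> z" using cert K(1) unfolding certificate_def by auto
    finally show "card (C1' \<inter> K') \<le> z" .
    have I1: "is_fvs (induced H' K') (C1' \<inter> K')" unfolding is_fvs_iff
    proof (intro conjI allI impI)
      show "C1' \<inter> K' \<subseteq> verts (induced H' K')" using C1'fvs unfolding is_fvs_def by auto
    next
      fix vs es assume c: "cyc (induced H' K') vs es"
      then have "cyc H' vs es" "set vs \<subseteq> K'" by (simp_all add: cyc_induced)
      then show "set vs \<inter> (C1' \<inter> K') \<noteq> {}" using C1'fvs unfolding is_fvs_iff by blast
    qed
    obtain X where X: "is_fvs (induced H' K') X" "card X = fvs (induced H' K')"
      using fvs_exists[of "induced H' K'"] finH' by auto
    have XK: "X \<subseteq> verts H' \<inter> K'" using X(1) unfolding is_fvs_def by auto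
    have finX: "finite X" using XK finH' finite_subset by blast
    have I2: "is_fvs H' ((C1' - K') \<union> X)" unfolding is_fvs_iff
    proof (intro conjI allI impI)
      show "(C1' - K') \<union> X \<subseteq> verts H'" using XK C1'fvs unfolding is_fvs_def by auto
    next
      fix vs es assume c: "cyc H' vs es"
      show "set vs \<inter> ((C1' - K') \<union> X) \<noteq> {}"
      proof (cases "set vs \<inter> K' = {}")
        case True
        then show ?thesis using C1'fvs c unfolding is_fvs_iff by blast
      next
        case False
        then have "set vs \<subseteq> K'" using cyc_comp[OF K' c] by blast
        then have "cyc (induced H' K') vs es" using c by (simp add: cyc_induced)
        then show ?thesis using X(1) unfolding is_fvs_iff by blast
      qed
    qed
    have b1: "card C1' \<le> card (C1' - K') + card X"
      using fvs_le[OF I2] fvsH' card_Un_le[of "C1' - K'" X] by linarith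
    have b2: "card C1' = card (C1' - K') + card (C1' \<inter> K')"
      using finC1' by (metis card_Int_Diff inf_commute add.commute)
    show "fvs (induced H' K') = card (C1' \<inter> K')"
      using fvs_le[OF I1] b1 b2 X(2) by linarith
  qed
  have Hsub': "subgraph H' (induced G' (C1' \<union> F1'))"
    using Hsub unfolding subgraph_def H'_def G'_def C1'_def F1'_def by auto
  have fvcG': "FVC G' C1' F1'" unfolding FVC_def
  proof (intro conjI ballI)
    show "C1' \<subseteq> verts G'" "F1' \<subseteq> verts G'" "C1' \<inter> F1' = {}"
      using fvc1 unfolding FVC_def G'_def C1'_def F1'_def by auto
  next
    show "forest (induced G' F1')" unfolding forest_cyc
    proof (intro allI notI)
      fix vs es assume c: "cyc (induced G' F1') vs es"
      then have "cyc G vs es" "set vs \<subseteq> F1" unfolding G'_def F1'_def by (auto simp: cyc_induced cyc_del)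
      then have "cyc (induced G F1) vs es" by (simp add: cyc_induced)
      then show False using fvc1 unfolding FVC_def forest_cyc by blast
    qed
  next
    fix T' assume T': "T' \<in> components (induced G' F1')"
    obtain T where T: "T \<in> components (induced G F1)" "T' \<subseteq> T"
      using comp_sub[OF T', of "induced G F1"] unfolding G'_def F1'_def by auto
    have "n_edges_between G' T' (verts G' - (C1' \<union> F1')) \<le> n_edges_between G T (verts G - (C1 \<union> F1))"
      unfolding n_edges_between_def using fin T(2)
      by (intro card_mono) (auto simp: G'_def C1'_def F1'_def)
    also have "\<dots> \<le> 1" using fvc1 T(1) unfolding FVC_def by auto
    finally show "n_edges_between G' T' (verts G' - (C1' \<union> F1')) \<le> 1" .
  qed
  have "card C1' \<le> fvs (induced G' (C1' \<union> F1'))"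
    using fvs_mono_sub[OF Hsub'] fvsH' fin unfolding G'_def by auto
  then have "antler G' C1' F1'" using fvcG' unfolding antler_def by auto
  moreover have "certificate H' C1' z"
    unfolding certificate_def min_fvs_def using C1'fvs fvsH' comps by auto
  ultimately show ?thesis using Hsub' unfolding z_antler_def G'_def C1'_def F1'_def S_def by auto
qed

end
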